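(* Let $\mathcal I$ be an ideal on $\mathbb N$ with the Baire property, and let $\sum_n x_n$ be a series in a Banach space $X$. Then $\sum_n x_n$ is unconditionally convergent if and only if the set $$A(\mathcal I,(x_n)):=\left\{t \in \{0,1\}^{\mathbb N} \colon \sum_n t(n)x_n \text{ is } \mathcal I\text{-convergent}\right\}$$ is nonmeager in $\{0,1\}^{\mathbb N}$.
   Context: $\mathbb N=\{1,2,\dots\}$. An ideal on $\mathbb N$ is a family $\mathcal I\subset\mathcal P(\mathbb N)$ closed under finite unions and subsets, with $\mathbb N\notin\mathcal I$ and containing all finite subsets of $\mathbb N$. Identifying subsets of $\mathbb N$ with their characteristic functions, $\mathcal I$ is regarded as a subset of the Cantor space $\{0,1\}^{\mathbb N}$ (product topology), and "$\mathcal I$ has the Baire property" refers to this subset. A sequence $(y_n)$ in a normed space is $\mathcal I$-convergent to $y$ if $\{n:\|y_n-y\|>\varepsilon\}\in\mathcal I$ for every $\varepsilon>0$; a series is $\mathcal I$-convergent if its sequence of partial sums is $\mathcal I$-convergent to some element. A series $\sum_n x_n$ is unconditionally convergent if $\sum_n x_{p(n)}$ converges for every permutation $p$ of $\mathbb N$. Banach spaces are over $\mathbb R$. *)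

theory Defs
  imports "HOL-Analysis.Analysis"
begin

(* N = {1,2,...} is relabelled as the HOL type nat = {0,1,2,...} via n |-> n-1. *)

definition is_ideal :: "nat set set \<Rightarrow> bool" where
  "is_ideal I \<longleftrightarrow>
     (\<forall>A\<in>I. \<forall>B\<in>I. A \<union> B \<in> I) \<and>
     (\<forall>A\<in>I. \<forall>B. B \<subseteq> A \<longrightarrow> B \<in> I) \<and>
     UNIV \<notin> I \<and>
     (\<forall>F. finite F \<longrightarrow> F \<in> I)"

definition nowhere_dense :: "'a::topological_space set \<Rightarrow> bool" where
  "nowhere_dense S \<longleftrightarrow> interior (closure S) = {}"

definition meager :: "'a::topological_space set \<Rightarrow> bool" where
  "meager S \<longleftrightarrow> (\<exists>\<F>. countable \<F> \<and> (\<forall>N\<in>\<F>. nowhere_dense N) \<and> S \<subseteq> \<Union>\<F>)"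

definition has_Baire_property :: "'a::topological_space set \<Rightarrow> bool" where
  "has_Baire_property S \<longleftrightarrow> (\<exists>U. open U \<and> meager ((S - U) \<union> (U - S)))"

definition ideal_as_cantor :: "nat set set \<Rightarrow> (nat \<Rightarrow> bool) set" where
  "ideal_as_cantor I = (\<lambda>A. \<lambda>n. n \<in> A) ` I"

definition I_convergent_to :: "nat set set \<Rightarrow> (nat \<Rightarrow> 'a::real_normed_vector) \<Rightarrow> 'a \<Rightarrow> bool" where
  "I_convergent_to I y L \<longleftrightarrow> (\<forall>\<epsilon>>0. {n. norm (y n - L) > \<epsilon>} \<in> I)"

(* series sum_n x_n is I-convergent: partial sums s_n = x_1 + ... + x_n (here x 0 + ... + x n) *)
definition I_convergent_series :: "nat set set \<Rightarrow> (nat \<Rightarrow> 'a::real_normed_vector) \<Rightarrow> bool" where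
  "I_convergent_series I x \<longleftrightarrow> (\<exists>L. I_convergent_to I (\<lambda>n. \<Sum>k\<le>n. x k) L)"

definition unconditionally_convergent :: "(nat \<Rightarrow> 'a::real_normed_vector) \<Rightarrow> bool" where
  "unconditionally_convergent x \<longleftrightarrow> (\<forall>p. bij p \<longrightarrow> summable (\<lambda>n. x (p n)))"

definition A_set :: "nat set set \<Rightarrow> (nat \<Rightarrow> 'a::real_normed_vector) \<Rightarrow> (nat \<Rightarrow> bool) set" where
  "A_set I x = {t. I_convergent_series I (\<lambda>n. (if t n then 1 else 0) *\<^sub>R x n)}"

end

theory Submission
  imports Defs
begin
definition cyl :: "(nat \<Rightarrow> bool) \<Rightarrow> nat \<Rightarrow> (nat \<Rightarrow> bool) set" where
  "cyl v m = {t. \<forall>i<m. t i = v i}"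

lemma open_cyl: "open (cyl v m)"
proof -
  have "cyl v m = {f. \<forall>i\<in>{..<m}. f (id i) \<in> {v i}}" by (auto simp: cyl_def)
  moreover have "open {f. \<forall>i\<in>{..<m}. f (id i) \<in> {v i}}"
    by (rule product_topology_basis') (auto intro: open_discrete)
  ultimately show ?thesis by simp
qed

lemma open_contains_cyl:
  assumes "open U" "p \<in> U"
  shows "\<exists>m. cyl p m \<subseteq> U"
proof -
  have *: "openin (product_topology (\<lambda>i. euclidean) UNIV) U"
    using open_fun_def assms by auto
  obtain X where H: "Pi\<^sub>E UNIV X \<subseteq> U"
                    "\<And>i. openin euclidean (X i)"
                    "finite {i. X i \<noteq> topspace euclidean}"
                    "p \<in> Pi\<^sub>E UNIV X"
    using product_topology_open_contains_basis[OF * \<open>p \<in> U\<close>] by auto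
  obtain m where m: "\<forall>i\<in>{i. X i \<noteq> topspace euclidean}. i < m"
    using H(3) finite_nat_set_iff_bounded by blast
  have "cyl p m \<subseteq> Pi\<^sub>E UNIV X"
  proof
    fix t assume t: "t \<in> cyl p m"
    show "t \<in> Pi\<^sub>E UNIV X"
    proof (simp add: PiE_iff, intro allI)
      fix i
      show "t i \<in> X i"
      proof (cases "X i = topspace euclidean")
        case True then show ?thesis by simp
      next
        case False
        then have "i < m" using m by auto
        then have "t i = p i" using t by (auto simp: cyl_def)
        then show ?thesis using H(4) by (auto simp: PiE_iff)
      qed
    qed
  qed
  then show ?thesis using H(1) by blast
qed

definition cylND :: "(nat \<Rightarrow> bool) set \<Rightarrow> bool" where
  "cylND C \<longleftrightarrow> (\<forall>v m. \<exists>v' m'. m' > m \<and> (\<forall>i<m. v' i = v i) \<and> cyl v' m' \<inter> C = {})"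

lemma cyl_mono: "m \<le> m' \<Longrightarrow> (\<forall>i<m. v' i = v i) \<Longrightarrow> cyl v' m' \<subseteq> cyl v m"
  by (auto simp: cyl_def)

lemma cyl_self: "v \<in> cyl v m" by (simp add: cyl_def)

lemma nowhere_dense_cylND:
  assumes "interior (closure C) = {}"
  shows "cylND C"
  unfolding cylND_def
proof (intro allI)
  fix v m
  have "\<not> cyl v m \<subseteq> closure C"
  proof
    assume "cyl v m \<subseteq> closure C"
    then have "cyl v m \<subseteq> interior (closure C)" using open_cyl interior_maximal by blast
    then show False using assms cyl_self by blast
  qed
  then obtain q where q: "q \<in> cyl v m" "q \<notin> closure C" by blast
  have "open (cyl v m - closure C)" using open_cyl by (simp add: open_Diff)
  then obtain m0 where m0: "cyl q m0 \<subseteq> cyl v m - closure C"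
    using open_contains_cyl q by blast
  define m' where "m' = max m0 (Suc m)"
  have "cyl q m' \<subseteq> cyl q m0" by (rule cyl_mono) (auto simp: m'_def)
  then have "cyl q m' \<inter> C = {}" using m0 closure_subset by blast
  moreover have "\<forall>i<m. q i = v i" using q by (simp add: cyl_def)
  ultimately show "\<exists>v' m'. m' > m \<and> (\<forall>i<m. v' i = v i) \<and> cyl v' m' \<inter> C = {}"
    by (intro exI[of _ q] exI[of _ m']) (auto simp: m'_def)
qed

lemma cylND_nowhere_dense:
  assumes "cylND C"
  shows "interior (closure C) = {}"
proof (rule ccontr)
  assume "interior (closure C) \<noteq> {}"
  then obtain q where q: "q \<in> interior (closure C)" by blast
  obtain m where m: "cyl q m \<subseteq> interior (closure C)"
    using open_contains_cyl[OF open_interior q] by blast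
  have "\<exists>v' m'. m' > m \<and> (\<forall>i<m. v' i = q i) \<and> cyl v' m' \<inter> C = {}"
    using assms unfolding cylND_def by simp
  then obtain v' m' where v': "m' > m" "\<forall>i<m. v' i = q i" "cyl v' m' \<inter> C = {}"
    by blast
  have "cyl v' m' \<subseteq> cyl q m"
    using v' by (intro cyl_mono) auto
  then have "cyl v' m' \<subseteq> closure C"
    using m interior_subset by blast
  then have "cyl v' m' \<inter> closure C \<noteq> {}" using cyl_self by blast
  then show False using open_Int_closure_eq_empty[OF open_cyl, of v' m' C] v'(3) by simp
qed

lemma cylND_D:
  assumes "cylND C"
  obtains v' m' where "m' > m" "\<forall>i<m. v' i = v i" "cyl v' m' \<inter> C = {}"
proof -
  have "\<exists>v' m'. m' > m \<and> (\<forall>i<m. v' i = v i) \<and> cyl v' m' \<inter> C = {}"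
    using assms unfolding cylND_def by simp
  then show ?thesis using that by blast
qed

lemma cylND_I:
  assumes "\<And>v m. \<exists>v' m'. m' > m \<and> (\<forall>i<m. v' i = v i) \<and> cyl v' m' \<inter> C = {}"
  shows "cylND C"
  unfolding cylND_def using assms by simp

lemma cylND_Un:
  assumes A: "cylND A" and B: "cylND B"
  shows "cylND (A \<union> B)"
proof (rule cylND_I)
  fix v m
  obtain v1 m1 where 1: "m1 > m" "\<forall>i<m. v1 i = v i" "cyl v1 m1 \<inter> A = {}"
    using cylND_D[OF A] by metis
  obtain v2 m2 where 2: "m2 > m1" "\<forall>i<m1. v2 i = v1 i" "cyl v2 m2 \<inter> B = {}"
    using cylND_D[OF B] by metis
  have 3: "\<forall>i<m. v2 i = v i" using 1 2 by auto
  have "cyl v2 m2 \<subseteq> cyl v1 m1" using 2 by (intro cyl_mono) auto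
  then have "cyl v2 m2 \<inter> (A \<union> B) = {}" using 1 2 by blast
  then show "\<exists>v' m'. m' > m \<and> (\<forall>i<m. v' i = v i) \<and> cyl v' m' \<inter> (A \<union> B) = {}"
    using 1 2 3 by (intro exI[of _ v2] exI[of _ m2]) simp
qed

lemma cylND_empty: "cylND {}"
proof (rule cylND_I)
  fix v :: "nat \<Rightarrow> bool" and m :: nat
  show "\<exists>v' m'. m' > m \<and> (\<forall>i<m. v' i = v i) \<and> cyl v' m' \<inter> {} = {}"
    by (intro exI[of _ v] exI[of _ "Suc m"]) simp
qed

lemma cylND_mono:
  assumes "cylND A" "B \<subseteq> A" shows "cylND B"
proof (rule cylND_I)
  fix v m
  obtain v1 m1 where 1: "m1 > m" "\<forall>i<m. v1 i = v i" "cyl v1 m1 \<inter> A = {}"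
    using cylND_D[OF assms(1)] by metis
  then show "\<exists>v' m'. m' > m \<and> (\<forall>i<m. v' i = v i) \<and> cyl v' m' \<inter> B = {}"
    using assms(2) by (intro exI[of _ v1] exI[of _ m1]) auto
qed

lemma cylND_UN_atMost: fixes N :: "nat \<Rightarrow> (nat \<Rightarrow> bool) set" shows "(\<And>k. cylND (N k)) \<Longrightarrow> cylND (\<Union>k\<le>j. N k)"
proof (induction j)
  case 0 then show ?case by simp
next
  case (Suc j)
  have "(\<Union>k\<le>Suc j. N k) = (\<Union>k\<le>j. N k) \<union> N (Suc j)" by (auto simp: atMost_Suc)
  then show ?case using Suc.prems Suc.IH cylND_Un[of "\<Union>k\<le>j. N k" "N (Suc j)"] by simp
qed

definition meagerC :: "(nat \<Rightarrow> bool) set \<Rightarrow> bool" where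
  "meagerC X \<longleftrightarrow> (\<exists>N::nat \<Rightarrow> (nat \<Rightarrow> bool) set. (\<forall>k. cylND (N k)) \<and> X \<subseteq> (\<Union>k. N k))"


lemma meager_imp_meagerC:
  assumes "meager X" shows "meagerC X"
proof -
  obtain F where F: "countable F" "\<forall>N\<in>F. nowhere_dense N" "X \<subseteq> \<Union>F"
    using assms unfolding meager_def by blast
  show ?thesis
  proof (cases "F = {}")
    case True
    then show ?thesis unfolding meagerC_def using F cylND_empty
      by (intro exI[of _ "\<lambda>k. {}"]) auto
  next
    case False
    have r: "range (from_nat_into F) = F" using False F(1) by simp
    have "\<forall>k. cylND (from_nat_into F k)"
      using F(2) r nowhere_dense_cylND unfolding nowhere_dense_def by blast
    moreover have "X \<subseteq> (\<Union>k. from_nat_into F k)" using F(3) r by simp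
    ultimately show ?thesis unfolding meagerC_def by blast
  qed
qed

lemma meagerC_imp_meager:
  assumes "meagerC X" shows "meager X"
proof -
  obtain N :: "nat \<Rightarrow> (nat \<Rightarrow> bool) set" where N: "\<forall>k. cylND (N k)" "X \<subseteq> (\<Union>k. N k)"
    using assms unfolding meagerC_def by blast
  have 1: "\<forall>M\<in>range N. nowhere_dense M"
    using N(1) cylND_nowhere_dense unfolding nowhere_dense_def by simp
  have 2: "countable (range N)" by simp
  have 3: "X \<subseteq> \<Union>(range N)" using N(2) by simp
  show ?thesis unfolding meager_def using 1 2 3 by blast
qed

definition merge :: "(nat \<Rightarrow> bool) \<Rightarrow> (nat \<Rightarrow> bool) \<Rightarrow> nat \<Rightarrow> nat \<Rightarrow> bool" where
  "merge u w n = (\<lambda>i. if i < n then u i else w i)"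

lemma prefix_step_fin:
  assumes D: "cylND D" and S: "finite S"
  shows "\<exists>m>n. \<exists>w. \<forall>u\<in>S. cyl (merge u w n) m \<inter> D = {}"
  using S
proof induction
  case empty
  show ?case by (intro exI[of _ "Suc n"]) auto
next
  case (insert u S)
  then obtain m w where mw: "m > n" "\<forall>u\<in>S. cyl (merge u w n) m \<inter> D = {}" by blast
  obtain v' m' where v': "m' > m" "\<forall>i<m. v' i = merge u w n i" "cyl v' m' \<inter> D = {}"
    using cylND_D[OF D] by metis
  have "\<forall>u0\<in>insert u S. cyl (merge u0 v' n) m' \<inter> D = {}"
  proof
    fix u0 assume u0: "u0 \<in> insert u S"
    show "cyl (merge u0 v' n) m' \<inter> D = {}"
    proof (cases "u0 = u")
      case True
      have "cyl (merge u0 v' n) m' \<subseteq> cyl v' m'"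
        using True v' mw by (intro cyl_mono) (auto simp: merge_def)
      then show ?thesis using v' by blast
    next
      case False
      then have "u0 \<in> S" using u0 by simp
      have "cyl (merge u0 v' n) m' \<subseteq> cyl (merge u0 w n) m"
        using v' mw by (intro cyl_mono) (auto simp: merge_def)
      then show ?thesis using mw \<open>u0 \<in> S\<close> by blast
    qed
  qed
  then show ?case using mw v' by (intro exI[of _ m'] conjI exI[of _ v']) auto
qed

lemma prefix_step:
  assumes D: "cylND D"
  shows "\<exists>m>n. \<exists>w. \<forall>t. cyl (merge t w n) m \<inter> D = {}"
proof -
  define S where "S = {u :: nat \<Rightarrow> bool. \<forall>i\<ge>n. \<not> u i}"
  have "S \<subseteq> (\<lambda>A i. i \<in> A) ` Pow {..<n}"
  proof
    fix u assume "u \<in> S"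
    then have "u = (\<lambda>i. i \<in> {i. u i})" "{i. u i} \<in> Pow {..<n}"
      by (auto simp: S_def) (meson not_less)
    then show "u \<in> (\<lambda>A i. i \<in> A) ` Pow {..<n}" by blast
  qed
  then have "finite S" by (rule finite_subset) simp
  then obtain m w where mw: "m > n" "\<forall>u\<in>S. cyl (merge u w n) m \<inter> D = {}"
    using prefix_step_fin[OF D] by blast
  have "cyl (merge t w n) m \<inter> D = {}" for t
  proof -
    have "merge t w n = merge (\<lambda>i. i < n \<and> t i) w n" by (auto simp: merge_def)
    moreover have "(\<lambda>i. i < n \<and> t i) \<in> S" by (auto simp: S_def)
    ultimately show ?thesis using mw by metis
  qed
  then show ?thesis using mw by blast
qed

lemma meagerC_structure:
  assumes "meagerC X"
  shows "\<exists>nn w. strict_mono (nn :: nat \<Rightarrow> nat) \<and>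
           (\<forall>t\<in>X. \<exists>k. \<forall>j\<ge>k. \<exists>i\<in>{nn j..<nn (Suc j)}. t i \<noteq> w j i)"
proof -
  obtain N :: "nat \<Rightarrow> (nat \<Rightarrow> bool) set" where N: "\<forall>k. cylND (N k)" "X \<subseteq> (\<Union>k. N k)"
    using assms unfolding meagerC_def by blast
  define D where "D j = (\<Union>k\<le>j. N k)" for j
  have D: "cylND (D j)" for j unfolding D_def using N(1) cylND_UN_atMost by blast
  have "\<forall>j. \<forall>n. \<exists>mw. fst mw > n \<and> (\<forall>t. cyl (merge t (snd mw) n) (fst mw) \<inter> D j = {})"
  proof (intro allI)
    fix j n
    obtain m w where "m > n" "\<forall>t. cyl (merge t w n) m \<inter> D j = {}"
      using prefix_step[OF D[of j], of n] by blast
    then show "\<exists>mw. fst mw > n \<and> (\<forall>t. cyl (merge t (snd mw) n) (fst mw) \<inter> D j = {})"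
      by (intro exI[of _ "(m, w)"]) simp
  qed
  then have "\<exists>G. \<forall>j. \<forall>n. fst (G j n) > n \<and> (\<forall>t. cyl (merge t (snd (G j n)) n) (fst (G j n)) \<inter> D j = {})"
    unfolding choice_iff .
  then obtain G where G: "\<And>j n. fst (G j n) > n \<and> (\<forall>t. cyl (merge t (snd (G j n)) n) (fst (G j n)) \<inter> D j = {})"
    by blast
  define nn where "nn = rec_nat 0 (\<lambda>j a. fst (G j a))"
  have nn0: "nn 0 = 0" and nnS: "nn (Suc j) = fst (G j (nn j))" for j by (simp_all add: nn_def)
  define w where "w j = snd (G j (nn j))" for j
  have sm: "strict_mono nn"
    unfolding strict_mono_Suc_iff using G nnS by simp
  have "\<forall>t\<in>X. \<exists>k. \<forall>j\<ge>k. \<exists>i\<in>{nn j..<nn (Suc j)}. t i \<noteq> w j i"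
  proof
    fix t assume "t \<in> X"
    then obtain k where k: "t \<in> N k" using N(2) by blast
    have "\<exists>i\<in>{nn j..<nn (Suc j)}. t i \<noteq> w j i" if "j \<ge> k" for j
    proof (rule ccontr)
      assume "\<not> ?thesis"
      then have agree: "\<forall>i\<in>{nn j..<nn (Suc j)}. t i = w j i" by blast
      have "t \<in> cyl (merge t (w j) (nn j)) (nn (Suc j))"
        using agree by (auto simp: cyl_def merge_def)
      moreover have "t \<in> D j" using k that unfolding D_def by blast
      moreover have "cyl (merge t (w j) (nn j)) (nn (Suc j)) \<inter> D j = {}"
        using G[where j=j and n="nn j"] by (simp add: nnS w_def)
      ultimately show False by blast
    qed
    then show "\<exists>k. \<forall>j\<ge>k. \<exists>i\<in>{nn j..<nn (Suc j)}. t i \<noteq> w j i" by blast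
  qed
  then show ?thesis using sm by (intro exI[of _ nn] exI[of _ w]) simp
qed

lemma block_unique:
  assumes "strict_mono (nn :: nat \<Rightarrow> nat)" "i \<in> {nn j..<nn (Suc j)}" "i \<in> {nn j'..<nn (Suc j')}"
  shows "j = j'"
proof (rule ccontr)
  assume "j \<noteq> j'"
  have mono: "mono nn" using assms(1) strict_mono_mono by blast
  show False
  proof (cases "j < j'")
    case True
    then have "nn (Suc j) \<le> nn j'" using mono by (simp add: monoD)
    then show False using assms by auto
  next
    case False
    then have "j' < j" using \<open>j \<noteq> j'\<close> by simp
    then have "nn (Suc j') \<le> nn j" using mono by (simp add: monoD)
    then show False using assms by auto
  qed
qed

lemma meagerC_not_cyl:
  assumes "meagerC X"
  shows "\<not> cyl v m \<subseteq> X"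
proof
  assume sub: "cyl v m \<subseteq> X"
  obtain nn w where nn: "strict_mono (nn :: nat \<Rightarrow> nat)"
    and H: "\<forall>t\<in>X. \<exists>k. \<forall>j\<ge>k. \<exists>i\<in>{nn j..<nn (Suc j)}. t i \<noteq> w j i"
    using meagerC_structure[OF assms] by blast
  define t where "t i = (if i < m then v i else w (LEAST j. i < nn (Suc j)) i)" for i
  have "t \<in> cyl v m" by (simp add: cyl_def t_def)
  then obtain k where k: "\<forall>j\<ge>k. \<exists>i\<in>{nn j..<nn (Suc j)}. t i \<noteq> w j i"
    using H sub by blast
  define j where "j = max k m"
  have "k \<le> j" by (simp add: j_def)
  obtain i where i: "i \<in> {nn j..<nn (Suc j)}" "t i \<noteq> w j i" using k[rule_format, OF \<open>k \<le> j\<close>] by blast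
  have "j \<le> nn j" using nn strict_mono_imp_increasing by blast
  then have "m \<le> i" using i j_def by auto
  have "(LEAST j. i < nn (Suc j)) = j"
  proof (rule Least_equality)
    show "i < nn (Suc j)" using i by simp
  next
    fix y assume "i < nn (Suc y)"
    then have "i \<in> {nn y..<nn (Suc y)} \<or> i < nn y" by auto
    show "j \<le> y"
    proof (rule ccontr)
      assume "\<not> j \<le> y"
      then have "Suc y \<le> j" by simp
      then have "nn (Suc y) \<le> nn j" using nn strict_mono_mono by (metis monoD)
      then show False using i \<open>i < nn (Suc y)\<close> by auto
    qed
  qed
  then have "t i = w j i" using \<open>m \<le> i\<close> by (simp add: t_def)
  then show False using i by simp
qed

definition flip :: "nat \<Rightarrow> (nat \<Rightarrow> bool) \<Rightarrow> nat \<Rightarrow> bool" where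
  "flip m t = (\<lambda>i. if i < m then t i else \<not> t i)"

lemma flip_flip[simp]: "flip m (flip m t) = t"
  by (auto simp: flip_def)

lemma flip_cylND:
  assumes C: "cylND C"
  shows "cylND (flip m -` C)"
proof (rule cylND_I)
  fix v m0
  obtain v' m' where v': "m' > m0" "\<forall>i<m0. v' i = flip m v i" "cyl v' m' \<inter> C = {}"
    using cylND_D[OF C] by metis
  have 1: "\<forall>i<m0. flip m v' i = v i" using v'(2) by (auto simp: flip_def)
  have 2: "cyl (flip m v') m' \<inter> flip m -` C = {}"
  proof (rule ccontr)
    assume "cyl (flip m v') m' \<inter> flip m -` C \<noteq> {}"
    then obtain t where t: "t \<in> cyl (flip m v') m'" "flip m t \<in> C" by blast
    have "flip m t \<in> cyl v' m'" using t(1) by (auto simp: cyl_def flip_def)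
    then show False using t(2) v'(3) by blast
  qed
  show "\<exists>v'' m''. m'' > m0 \<and> (\<forall>i<m0. v'' i = v i) \<and> cyl v'' m'' \<inter> flip m -` C = {}"
    using 1 2 v'(1) by blast
qed

lemma meagerC_mono: "meagerC X \<Longrightarrow> Y \<subseteq> X \<Longrightarrow> meagerC Y"
  unfolding meagerC_def by blast

lemma ideal_meagerC:
  assumes I: "is_ideal I" and B: "has_Baire_property (ideal_as_cantor I)"
  shows "meagerC (ideal_as_cantor I)"
proof (rule ccontr)
  define Ic where "Ic = ideal_as_cantor I"
  assume nm: "\<not> meagerC (ideal_as_cantor I)"
  obtain U where U: "open U" "meager ((Ic - U) \<union> (U - Ic))"
    using B unfolding has_Baire_property_def Ic_def by blast
  have mC: "meagerC ((Ic - U) \<union> (U - Ic))" using U(2) meager_imp_meagerC by blast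
  have "U \<noteq> {}"
  proof
    assume "U = {}"
    then have "meagerC Ic" using mC by simp
    then show False using nm Ic_def by simp
  qed
  then obtain p where "p \<in> U" by blast
  then obtain m where m: "cyl p m \<subseteq> U" using open_contains_cyl U(1) by blast
  obtain N :: "nat \<Rightarrow> (nat \<Rightarrow> bool) set" where N: "\<forall>k. cylND (N k)" "(Ic - U) \<union> (U - Ic) \<subseteq> (\<Union>k. N k)"
    using mC unfolding meagerC_def by blast
  define N' where "N' k = N k \<union> flip m -` N k" for k
  have "cylND (N' k)" for k unfolding N'_def using N(1) flip_cylND cylND_Un by blast
  then have "meagerC (\<Union>k. N' k)" unfolding meagerC_def by blast
  then have "\<not> cyl p m \<subseteq> (\<Union>k. N' k)" by (rule meagerC_not_cyl)
  then obtain t where t: "t \<in> cyl p m" "\<forall>k. t \<notin> N' k" by blast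
  have tU: "t \<in> U" using t m by blast
  have ftU: "flip m t \<in> U" using t(1) m by (auto simp: cyl_def flip_def)
  have "t \<in> Ic" using tU t(2) N(2) unfolding N'_def by blast
  moreover have "flip m t \<in> Ic" using ftU t(2) N(2) unfolding N'_def by blast
  ultimately obtain A B where AB: "A \<in> I" "B \<in> I" "t = (\<lambda>n. n \<in> A)" "flip m t = (\<lambda>n. n \<in> B)"
    unfolding Ic_def ideal_as_cantor_def by blast
  have "A \<union> B \<union> {..<m} = UNIV"
  proof (intro set_eqI iffI)
    fix i :: nat
    show "i \<in> A \<union> B \<union> {..<m}"
    proof (cases "i < m")
      case False
      have "flip m t i = (\<not> t i)" using False by (simp add: flip_def)
      then show ?thesis using AB(3,4) by (metis UnI1 UnI2)
    qed simp
  qed simp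
  moreover have "A \<union> B \<union> {..<m} \<in> I"
    using I AB(1,2) unfolding is_ideal_def by (meson finite_lessThan)
  ultimately show False using I unfolding is_ideal_def by simp
qed

lemma ideal_sub: "is_ideal I \<Longrightarrow> A \<in> I \<Longrightarrow> B \<subseteq> A \<Longrightarrow> B \<in> I"
  unfolding is_ideal_def by blast

lemma ideal_finite: "is_ideal I \<Longrightarrow> finite F \<Longrightarrow> F \<in> I"
  unfolding is_ideal_def by blast

lemma ideal_blocks:
  assumes I: "is_ideal I" and mC: "meagerC (ideal_as_cantor I)"
  shows "\<exists>nn. strict_mono (nn :: nat \<Rightarrow> nat) \<and> (\<forall>A\<in>I. finite {j. {nn j..<nn (Suc j)} \<subseteq> A})"
proof -
  obtain nn w where nn: "strict_mono (nn :: nat \<Rightarrow> nat)"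
    and H: "\<forall>t\<in>ideal_as_cantor I. \<exists>k. \<forall>j\<ge>k. \<exists>i\<in>{nn j..<nn (Suc j)}. t i \<noteq> w j i"
    using meagerC_structure[OF mC] by blast
  have "finite {j. {nn j..<nn (Suc j)} \<subseteq> A}" if A: "A \<in> I" for A
  proof (rule ccontr)
    define J where "J = {j. {nn j..<nn (Suc j)} \<subseteq> A}"
    assume "infinite {j. {nn j..<nn (Suc j)} \<subseteq> A}"
    then have infJ: "infinite J" by (simp add: J_def)
    define A' where "A' = {i. \<exists>j\<in>J. i \<in> {nn j..<nn (Suc j)} \<and> w j i}"
    have "A' \<subseteq> A" unfolding A'_def J_def by blast
    then have "A' \<in> I" using ideal_sub[OF I A] by blast
    then have "(\<lambda>n. n \<in> A') \<in> ideal_as_cantor I" unfolding ideal_as_cantor_def by blast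
    then have "\<exists>k. \<forall>j\<ge>k. \<exists>i\<in>{nn j..<nn (Suc j)}. (i \<in> A') \<noteq> w j i"
      using bspec[OF H] by simp
    then obtain k where k: "\<forall>j\<ge>k. \<exists>i\<in>{nn j..<nn (Suc j)}. (i \<in> A') \<noteq> w j i"
      by blast
    have "\<forall>m. \<exists>n\<ge>m. n \<in> J" using infJ by (simp add: infinite_nat_iff_unbounded_le)
    then obtain j where j: "j \<in> J" "k \<le> j" by blast
    obtain i where i: "i \<in> {nn j..<nn (Suc j)}" "(i \<in> A') \<noteq> w j i"
      using k[rule_format, OF j(2)] by blast
    have "(i \<in> A') = w j i"
    proof
      assume "i \<in> A'"
      then obtain j' where "j' \<in> J" "i \<in> {nn j'..<nn (Suc j')}" "w j' i" unfolding A'_def by blast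
      moreover have "j' = j" using block_unique[OF nn i(1) \<open>i \<in> {nn j'..<nn (Suc j')}\<close>] by simp
      ultimately show "w j i" by simp
    next
      assume "w j i"
      then show "i \<in> A'" using i(1) j(1) unfolding A'_def by blast
    qed
    then show False using i(2) by simp
  qed
  then show ?thesis using nn by (intro exI[of _ nn]) simp
qed

definition fcauchy :: "(nat \<Rightarrow> 'a::real_normed_vector) \<Rightarrow> bool" where
  "fcauchy x \<longleftrightarrow> (\<forall>e>0. \<exists>N. \<forall>F. finite F \<and> F \<subseteq> {N..} \<longrightarrow> norm (sum x F) < e)"

lemma fcauchy_perm:
  fixes x :: "nat \<Rightarrow> 'a::banach"
  assumes fc: "fcauchy x" and p: "bij p"
  shows "summable (\<lambda>n. x (p n))"
  unfolding summable_Cauchy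
proof (intro allI impI)
  fix e :: real assume "e > 0"
  then have "\<exists>N. \<forall>F. finite F \<and> F \<subseteq> {N..} \<longrightarrow> norm (sum x F) < e"
    using fc unfolding fcauchy_def by simp
  then obtain N where N: "\<And>F. finite F \<Longrightarrow> F \<subseteq> {N..} \<Longrightarrow> norm (sum x F) < e"
    by auto
  have inj: "inj p" using p bij_is_inj by blast
  have "finite (p -` {..<N})" using inj by (intro finite_vimageI) auto
  then obtain N' where N': "\<forall>i\<in>p -` {..<N}. i < N'" using finite_nat_set_iff_bounded by blast
  have "norm (sum (\<lambda>n. x (p n)) {m..<n}) < e" if "m \<ge> N'" for m n
  proof -
    have "sum (\<lambda>n. x (p n)) {m..<n} = sum x (p ` {m..<n})"
      using sum.reindex[of p "{m..<n}" x] inj_on_subset[OF inj] by (simp add: comp_def)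
    moreover have "p ` {m..<n} \<subseteq> {N..}"
    proof
      fix y assume "y \<in> p ` {m..<n}"
      then obtain i where i: "i \<in> {m..<n}" "y = p i" by blast
      show "y \<in> {N..}"
      proof (rule ccontr)
        assume "y \<notin> {N..}"
        then have "i \<in> p -` {..<N}" using i by auto
        then have "i < N'" using N' by blast
        then show False using i(1) that by simp
      qed
    qed
    ultimately show ?thesis using N by simp
  qed
  then show "\<exists>N. \<forall>m\<ge>N. \<forall>n. norm (sum (\<lambda>n. x (p n)) {m..<n}) < e" by blast
qed

lemma fcauchy_unc:
  fixes x :: "nat \<Rightarrow> 'a::banach"
  shows "fcauchy x \<Longrightarrow> unconditionally_convergent x"
  unfolding unconditionally_convergent_def using fcauchy_perm by blast

lemma fcauchy_subseries:
  fixes x :: "nat \<Rightarrow> 'a::banach"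
  assumes fc: "fcauchy x"
  shows "summable (\<lambda>n. (if t n then 1 else 0) *\<^sub>R x n)"
  unfolding summable_Cauchy
proof (intro allI impI)
  fix e :: real assume "e > 0"
  then have "\<exists>N. \<forall>F. finite F \<and> F \<subseteq> {N..} \<longrightarrow> norm (sum x F) < e"
    using fc unfolding fcauchy_def by simp
  then obtain N where N: "\<And>F. finite F \<Longrightarrow> F \<subseteq> {N..} \<Longrightarrow> norm (sum x F) < e"
    by auto
  have "norm (sum (\<lambda>n. (if t n then 1 else 0) *\<^sub>R x n) {m..<n}) < e" if "m \<ge> N" for m n
  proof -
    have "sum x {i\<in>{m..<n}. t i} = sum (\<lambda>i. if t i then x i else 0) {m..<n}"
      by (rule sum.inter_filter) simp
    also have "\<dots> = sum (\<lambda>n. (if t n then 1 else 0) *\<^sub>R x n) {m..<n}"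
      by (rule sum.cong) auto
    finally have "sum (\<lambda>n. (if t n then 1 else 0) *\<^sub>R x n) {m..<n} = sum x {i\<in>{m..<n}. t i}" by simp
    moreover have "{i\<in>{m..<n}. t i} \<subseteq> {N..}" using that by auto
    ultimately show ?thesis using N by simp
  qed
  then show "\<exists>N. \<forall>m\<ge>N. \<forall>n. norm (sum (\<lambda>n. (if t n then 1 else 0) *\<^sub>R x n) {m..<n}) < e" by blast
qed

lemma summable_I_conv:
  fixes f :: "nat \<Rightarrow> 'a::banach"
  assumes I: "is_ideal I" and s: "summable f"
  shows "I_convergent_series I f"
proof -
  obtain L where "f sums L" using s by (auto simp: summable_def)
  then have "(\<lambda>n. \<Sum>k<n. f k) \<longlonglongrightarrow> L" by (simp add: sums_def)
  then have "(\<lambda>n. \<Sum>k<Suc n. f k) \<longlonglongrightarrow> L" by (rule LIMSEQ_Suc)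
  then have lim: "(\<lambda>n. \<Sum>k\<le>n. f k) \<longlonglongrightarrow> L" by (simp add: lessThan_Suc_atMost)
  have "{n. norm ((\<Sum>k\<le>n. f k) - L) > e} \<in> I" if "e > 0" for e
  proof -
    obtain N where N: "\<forall>n\<ge>N. dist (\<Sum>k\<le>n. f k) L < e" using lim \<open>e > 0\<close> LIMSEQ_def by metis
    have "{n. norm ((\<Sum>k\<le>n. f k) - L) > e} \<subseteq> {..<N}"
      using N by (auto simp: dist_norm) (meson less_asym not_le)
    then show ?thesis using ideal_sub[OF I ideal_finite[OF I, of "{..<N}"]] by simp
  qed
  then show ?thesis unfolding I_convergent_series_def I_convergent_to_def by blast
qed

lemma not_fcauchy_not_unc:
  fixes x :: "nat \<Rightarrow> 'a::banach"
  assumes nf: "\<not> fcauchy x"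
  shows "\<not> unconditionally_convergent x"
proof -
  have "\<exists>e>0. \<forall>N. \<exists>F. finite F \<and> F \<subseteq> {N..} \<and> e \<le> norm (sum x F)"
    using nf unfolding fcauchy_def by (simp add: not_less)
  then obtain e where e: "e > 0" "\<forall>N. \<exists>F. finite F \<and> F \<subseteq> {N..} \<and> e \<le> norm (sum x F)"
    by blast
  from e(2) have "\<exists>Fc. \<forall>N. finite (Fc N) \<and> Fc N \<subseteq> {N..} \<and> e \<le> norm (sum x (Fc N))"
    unfolding choice_iff .
  then obtain Fc where Fc: "\<And>N. finite (Fc N)" "\<And>N. Fc N \<subseteq> {N..}" "\<And>N. e \<le> norm (sum x (Fc N))"
    by blast
  define a where "a = rec_nat 0 (\<lambda>j aj. Max (Fc aj) + 1 + card (Fc aj))"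
  have aS: "a (Suc j) = Max (Fc (a j)) + 1 + card (Fc (a j))" for j by (simp add: a_def)
  define F where "F j = Fc (a j)" for j
  define b where "b j = Max (F j) + 1" for j
  define R where "R j = {b j..<b j + card (F j)}" for j
  have Ffin: "finite (F j)" for j using Fc(1) by (simp add: F_def)
  have Fne: "F j \<noteq> {}" for j
  proof
    assume "F j = {}"
    then show False using Fc(3)[of "a j"] e(1) by (simp add: F_def)
  qed
  have FG: "F j \<subseteq> {a j..<b j}" for j
  proof
    fix i assume i: "i \<in> F j"
    then have "i \<ge> a j" using Fc(2)[of "a j"] by (auto simp: F_def)
    moreover have "i \<le> Max (F j)" using i Ffin by simp
    ultimately show "i \<in> {a j..<b j}" by (simp add: b_def)
  qed
  have aSb: "a (Suc j) = b j + card (F j)" for j by (simp add: aS b_def F_def)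
  have ab: "a j < b j" for j
  proof -
    obtain i where "i \<in> F j" using Fne by blast
    then show ?thesis using FG by fastforce
  qed
  have RG: "R j \<subseteq> {a j..<a (Suc j)}" for j using ab[of j] by (auto simp: R_def aSb)
  have FG': "F j \<subseteq> {a j..<a (Suc j)}" for j using FG[of j] by (auto simp: aSb)
  have FR0: "F j \<inter> R j = {}" for j using FG[of j] by (auto simp: R_def)
  have sm: "strict_mono a" unfolding strict_mono_Suc_iff using ab by (simp add: aSb trans_less_add1)
  have FF: "j = j'" if "i \<in> F j" "i \<in> F j'" for i j j'
    using block_unique[OF sm] FG' that by blast
  have RR: "j = j'" if "i \<in> R j" "i \<in> R j'" for i j j'
    using block_unique[OF sm] RG that by blast
  have FR: "False" if "i \<in> F j" "i \<in> R j'" for i j j'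
  proof -
    have "j = j'" using block_unique[OF sm] FG' RG that by blast
    then show False using FR0 that by blast
  qed
  have cardR: "card (R j) = card (F j)" for j by (simp add: R_def)
  have "\<forall>j. \<exists>g. bij_betw g (F j) (R j)"
    using finite_same_card_bij Ffin cardR by (metis R_def finite_atLeastLessThan)
  then have "\<exists>g. \<forall>j. bij_betw (g j) (F j) (R j)" unfolding choice_iff .
  then obtain g where g: "\<And>j. bij_betw (g j) (F j) (R j)" by blast
  define h where "h j = inv_into (F j) (g j)" for j
  have h: "bij_betw (h j) (R j) (F j)" for j unfolding h_def using g bij_betw_inv_into by blast
  define p where "p i = (if \<exists>j. i \<in> F j then g (THE j. i \<in> F j) i
                          else if \<exists>j. i \<in> R j then h (THE j. i \<in> R j) i else i)" for i
  have pF: "p i = g j i" if "i \<in> F j" for i j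
  proof -
    have "(THE j. i \<in> F j) = j" using that FF by blast
    then show ?thesis using that by (auto simp: p_def)
  qed
  have pR: "p i = h j i" if "i \<in> R j" for i j
  proof -
    have "\<not> (\<exists>j. i \<in> F j)" using that FR by blast
    moreover have "(THE j. i \<in> R j) = j" using that RR by blast
    ultimately show ?thesis using that by (auto simp: p_def)
  qed
  have pO: "p i = i" if "\<forall>j. i \<notin> F j" "\<forall>j. i \<notin> R j" for i
    using that by (simp add: p_def)
  have inv: "p (p i) = i" for i
  proof (cases "\<exists>j. i \<in> F j")
    case True
    then obtain j where j: "i \<in> F j" by blast
    have "g j i \<in> R j" using g j bij_betwE by blast
    then have "p (p i) = h j (g j i)" using pF[OF j] pR by simp
    also have "\<dots> = i" unfolding h_def using g j bij_betw_imp_inj_on inv_into_f_f by metis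
    finally show ?thesis .
  next
    case False
    show ?thesis
    proof (cases "\<exists>j. i \<in> R j")
      case True
      then obtain j where j: "i \<in> R j" by blast
      have "h j i \<in> F j" using h j bij_betwE by blast
      then have "p (p i) = g j (h j i)" using pR[OF j] pF by simp
      also have "\<dots> = i" unfolding h_def using g j bij_betw_imp_surj_on f_inv_into_f by metis
      finally show ?thesis .
    next
      case False
      then show ?thesis using \<open>\<not> (\<exists>j. i \<in> F j)\<close> pO by simp
    qed
  qed
  have bp: "bij p" using inv involuntory_imp_bij by blast
  have "\<not> summable (\<lambda>n. x (p n))"
  proof
    assume "summable (\<lambda>n. x (p n))"
    then obtain N where N: "\<forall>m\<ge>N. \<forall>n. norm (sum (\<lambda>n. x (p n)) {m..<n}) < e"
      using e(1) unfolding summable_Cauchy by blast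
    have "N \<le> a N" using sm strict_mono_imp_increasing by blast
    then have "N \<le> b N" using ab[of N] by simp
    then have lt: "norm (sum (\<lambda>n. x (p n)) (R N)) < e" using N by (simp add: R_def)
    have "p ` R N = h N ` R N" using pR by simp
    also have "\<dots> = F N" using h bij_betw_imp_surj_on by blast
    finally have img: "p ` R N = F N" .
    have "sum x (p ` R N) = sum (\<lambda>n. x (p n)) (R N)"
      using sum.reindex[of p "R N" x] inj_on_subset[OF bij_is_inj[OF bp]] by (simp add: comp_def)
    then have "sum (\<lambda>n. x (p n)) (R N) = sum x (F N)" using img by simp
    then show False using lt Fc(3)[of "a N"] by (simp add: F_def)
  qed
  then show ?thesis unfolding unconditionally_convergent_def using bp by blast
qed

lemma A_set_meagerC:
  fixes x :: "nat \<Rightarrow> 'a::banach"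
  assumes I: "is_ideal I" and nn: "strict_mono (nn :: nat \<Rightarrow> nat)"
    and blk: "\<forall>A\<in>I. finite {j. {nn j..<nn (Suc j)} \<subseteq> A}"
    and e: "e > 0" "\<forall>N. \<exists>F. finite F \<and> F \<subseteq> {N..} \<and> e \<le> norm (sum x F)"
  shows "meagerC (A_set I x)"
proof -
  define f where "f t k = (if t k then 1 else 0) *\<^sub>R x k" for t k
  define s where "s t n = (\<Sum>k\<le>n. f t k)" for t n
  define B where "B M = {t. \<forall>j\<ge>M. \<forall>j'\<ge>M. \<exists>k\<in>{nn j..<nn (Suc j)}. \<exists>k'\<in>{nn j'..<nn (Suc j')}.
                      norm (s t k - s t k') \<le> e / 2}" for M
  have incr: "j \<le> nn j" for j using nn strict_mono_imp_increasing by blast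
  have sub: "A_set I x \<subseteq> (\<Union>M. B M)"
  proof
    fix t assume "t \<in> A_set I x"
    then obtain L where L: "\<forall>\<epsilon>>0. {n. norm (s t n - L) > \<epsilon>} \<in> I"
      unfolding A_set_def I_convergent_series_def I_convergent_to_def s_def f_def by blast
    define E where "E = {n. norm (s t n - L) > e / 4}"
    have "e / 4 > 0" using e(1) by simp
    then have "E \<in> I" using L unfolding E_def by blast
    then have "finite {j. {nn j..<nn (Suc j)} \<subseteq> E}" using blk by blast
    then obtain M where M: "\<forall>j\<in>{j. {nn j..<nn (Suc j)} \<subseteq> E}. j < M"
      using finite_nat_set_iff_bounded by blast
    have close: "\<exists>k\<in>{nn j..<nn (Suc j)}. norm (s t k - L) \<le> e / 4" if "j \<ge> M" for j
    proof -
      have "\<not> {nn j..<nn (Suc j)} \<subseteq> E" using M that by force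
      then show ?thesis unfolding E_def by (auto simp: not_less)
    qed
    have "t \<in> B M"
      unfolding B_def
    proof (intro CollectI allI impI)
      fix j j' assume j: "M \<le> j" and j': "M \<le> j'"
      obtain k where k: "k \<in> {nn j..<nn (Suc j)}" "norm (s t k - L) \<le> e / 4" using close[OF j] by blast
      obtain k' where k': "k' \<in> {nn j'..<nn (Suc j')}" "norm (s t k' - L) \<le> e / 4" using close[OF j'] by blast
      have "norm (s t k - s t k') = norm ((s t k - L) - (s t k' - L))" by simp
      also have "\<dots> \<le> norm (s t k - L) + norm (s t k' - L)" by (rule norm_triangle_ineq4)
      also have "\<dots> \<le> e / 2" using k k' by simp
      finally show "\<exists>k\<in>{nn j..<nn (Suc j)}. \<exists>k'\<in>{nn j'..<nn (Suc j')}. norm (s t k - s t k') \<le> e / 2"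
        using k k' by blast
    qed
    then show "t \<in> (\<Union>M. B M)" by blast
  qed
  have nd: "cylND (B M)" for M
  proof (rule cylND_I)
    fix v m
    define j where "j = max M m"
    define a where "a = nn (Suc j)"
    obtain F where F: "finite F" "F \<subseteq> {a..}" "e \<le> norm (sum x F)" using e(2) by blast
    have Fne: "F \<noteq> {}" using F(3) e(1) by auto
    define j' where "j' = max M (Suc (Max F))"
    define m' where "m' = nn (Suc j')"
    define v' where "v' i = (if i < m then v i else i \<in> F)" for i
    have "Suc j' \<le> m'" using incr[of "Suc j'"] by (simp add: m'_def)
    have "Suc j \<le> a" using incr[of "Suc j"] by (simp add: a_def)
    have "a \<le> Max F" using F Fne by (meson Max_in atLeast_iff subsetD)
    have "m < m'" using \<open>Suc j' \<le> m'\<close> \<open>Suc j \<le> a\<close> \<open>a \<le> Max F\<close> by (simp add: j'_def j_def)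
    moreover have "\<forall>i<m. v' i = v i" by (simp add: v'_def)
    moreover have "cyl v' m' \<inter> B M = {}"
    proof (rule ccontr)
      assume "cyl v' m' \<inter> B M \<noteq> {}"
      then obtain t where t: "t \<in> cyl v' m'" "t \<in> B M" by blast
      have "M \<le> j" "M \<le> j'" by (simp_all add: j_def j'_def)
      then obtain k k' where k: "k \<in> {nn j..<nn (Suc j)}" and k': "k' \<in> {nn j'..<nn (Suc j')}"
        and le: "norm (s t k - s t k') \<le> e / 2"
        using t(2) unfolding B_def by blast
      have "m \<le> k" using k incr[of j] by (simp add: j_def)
      have "k < a" using k by (simp add: a_def)
      have "Max F < k'" using k' incr[of j'] by (simp add: j'_def)
      have "k' < m'" using k' by (simp add: m'_def)
      have Fsub: "F \<subseteq> {k<..k'}"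
      proof
        fix i assume "i \<in> F"
        then have "a \<le> i" "i \<le> Max F" using F by auto
        then show "i \<in> {k<..k'}" using \<open>k < a\<close> \<open>Max F < k'\<close> by simp
      qed
      have "k \<le> k'" using Fsub Fne by fastforce
      have "{..k'} = {..k} \<union> {k<..k'}" using \<open>k \<le> k'\<close> by auto
      then have "s t k' = s t k + sum (f t) {k<..k'}"
        unfolding s_def by (simp add: sum.union_disjoint[of "{..k}" "{k<..k'}"] ivl_disj_int)
      moreover have "sum (f t) {k<..k'} = sum x F"
      proof -
        have "sum (f t) {k<..k'} = sum (\<lambda>i. if i \<in> F then x i else 0) {k<..k'}"
        proof (rule sum.cong)
          fix i assume i: "i \<in> {k<..k'}"
          then have "m \<le> i" "i < m'" using \<open>m \<le> k\<close> \<open>k' < m'\<close> by auto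
          then have "t i = (i \<in> F)" using t(1) by (simp add: cyl_def v'_def)
          then show "f t i = (if i \<in> F then x i else 0)" by (simp add: f_def)
        qed simp
        also have "\<dots> = sum x {i \<in> {k<..k'}. i \<in> F}" by (rule sum.inter_filter[symmetric]) simp
        also have "{i \<in> {k<..k'}. i \<in> F} = F" using Fsub by blast
        finally show ?thesis .
      qed
      ultimately have "norm (s t k - s t k') = norm (sum x F)" by (simp add: norm_minus_commute)
      then show False using le F(3) e(1) by simp
    qed
    ultimately show "\<exists>v' m'. m' > m \<and> (\<forall>i<m. v' i = v i) \<and> cyl v' m' \<inter> B M = {}" by blast
  qed
  show ?thesis unfolding meagerC_def using sub nd by blast
qed

lemma UNIV_not_meager: "\<not> meager (UNIV :: (nat \<Rightarrow> bool) set)"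
proof
  assume "meager (UNIV :: (nat \<Rightarrow> bool) set)"
  then have "meagerC UNIV" by (rule meager_imp_meagerC)
  then have "\<not> cyl v 0 \<subseteq> UNIV" for v by (rule meagerC_not_cyl)
  then show False by simp
qed

theorem corollary3p3:
  fixes I :: "nat set set" and x :: "nat \<Rightarrow> 'a::banach"
  assumes "is_ideal I"
    and "has_Baire_property (ideal_as_cantor I)"
  shows "unconditionally_convergent x \<longleftrightarrow> \<not> meager (A_set I x)"
proof
  assume u: "unconditionally_convergent x"
  then have fc: "fcauchy x" using not_fcauchy_not_unc by blast
  have "A_set I x = UNIV"
  proof (intro set_eqI iffI)
    fix t :: "nat \<Rightarrow> bool"
    have "summable (\<lambda>n. (if t n then 1 else 0) *\<^sub>R x n)" using fcauchy_subseries[OF fc] .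
    then show "t \<in> A_set I x" unfolding A_set_def using summable_I_conv[OF assms(1)] by blast
  qed simp
  then show "\<not> meager (A_set I x)" using UNIV_not_meager by simp
next
  assume nm: "\<not> meager (A_set I x)"
  show "unconditionally_convergent x"
  proof (rule ccontr)
    assume "\<not> unconditionally_convergent x"
    then have "\<not> fcauchy x" using fcauchy_unc by blast
    then have "\<exists>e>0. \<forall>N. \<exists>F. finite F \<and> F \<subseteq> {N..} \<and> e \<le> norm (sum x F)"
      unfolding fcauchy_def by (simp add: not_less)
    then obtain e where e: "e > 0" "\<forall>N. \<exists>F. finite F \<and> F \<subseteq> {N..} \<and> e \<le> norm (sum x F)"
      by blast
    obtain nn where nn: "strict_mono (nn :: nat \<Rightarrow> nat)" "\<forall>A\<in>I. finite {j. {nn j..<nn (Suc j)} \<subseteq> A}"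
      using ideal_blocks[OF assms(1) ideal_meagerC[OF assms]] by blast
    have "meagerC (A_set I x)" using A_set_meagerC[OF assms(1) nn e] .
    then show False using nm meagerC_imp_meager by blast
  qed
qed

end
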